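(* Let $1\le l\le k-1$ and $3\le t_1\le\cdots\le t_k$. Then $$S^{(k-l+1)}(t_{l+1},\dots,t_k)\le(\log2)^{-l}S^{(k+1)}(t_1,\dots,t_k)$$ and $S^{(k+1)}(t_1,\dots,t_k)\gg_k\log t_k$.
   Context: For $m\ge1$ and $1\le s_1\le\cdots\le s_m$, with $s_0=1$, let $\mathscr{P}_*^m(\mathbf{s})=\{\mathbf{a}\in\mathbb{N}^m: a_i\in\mathscr{P}_*(s_{i-1},s_i)\ (1\le i\le m)\}$, where $\mathscr{P}_*(y,z)$ is the set of squarefree positive integers with all prime factors in $(y,z]$. $L^{(m+1)}(\mathbf{a})$ is the $m$-dimensional Lebesgue measure of $\bigcup[\log(d_1/2),\log d_1)\times\cdots\times[\log(d_m/2),\log d_m)$ over all $(d_1,\dots,d_m)\in\mathbb{N}^m$ with $d_1\cdots d_i\mid a_1\cdots a_i$ for all $1\le i\le m$. $S^{(m+1)}(\mathbf{s})=\sum_{\mathbf{a}\in\mathscr{P}_*^m(\mathbf{s})}L^{(m+1)}(\mathbf{a})/(a_1\cdots a_m)$. *)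

theory Defs
  imports "HOL-Analysis.Analysis" "HOL-Computational_Algebra.Computational_Algebra"
begin

definition Pstar :: "real \<Rightarrow> real \<Rightarrow> nat set" where
  "Pstar y z = {n. n > 0 \<and> squarefree n \<and> (\<forall>p \<in> prime_factors n. y < real p \<and> real p \<le> z)}"

text \<open>P_*^m(s) for s = [s_1,...,s_m], with the convention s_0 = 1
  (so s_{i-1} is (1 # s) ! i for 0-based i).\<close>
definition Pstar_vec :: "real list \<Rightarrow> nat list set" where
  "Pstar_vec s = {a. length a = length s \<and>
     (\<forall>i<length s. a ! i \<in> Pstar ((1 # s) ! i) (s ! i))}"

definition Lbox :: "nat list \<Rightarrow> (nat \<Rightarrow> real) set" where
  "Lbox d = PiE {..<length d} (\<lambda>i. {ln (real (d ! i) / 2)..<ln (real (d ! i))})"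

definition adm_d :: "nat list \<Rightarrow> nat list set" where
  "adm_d a = {d. length d = length a \<and> (\<forall>i<length d. d ! i > 0) \<and>
     (\<forall>i<length a. prod_list (take (Suc i) d) dvd prod_list (take (Suc i) a))}"

definition Lmeas :: "nat list \<Rightarrow> real" where
  "Lmeas a = measure (PiM {..<length a} (\<lambda>_. lborel)) (\<Union>d \<in> adm_d a. Lbox d)"

text \<open>S^{(m+1)}(s), m = length s (the index set P_*^m(s) is finite).\<close>
definition Ssum :: "real list \<Rightarrow> real" where
  "Ssum s = (\<Sum>a \<in> Pstar_vec s. Lmeas a / real (prod_list a))"

end

theory Submission
  imports Defs "HOL-Analysis.Harmonic_Numbers"
begin

lemma pre: "(\<lambda>x. \<lambda>j\<in>{..<m}. x (Suc j)) -` PiE {..<m} A \<inter> space (PiM {1..<Suc m} (\<lambda>_. lborel))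
        = PiE {1..<Suc m} (\<lambda>i. A (i - 1))"
proof (intro set_eqI iffI)
  fix x assume x: "x \<in> (\<lambda>x. \<lambda>j\<in>{..<m}. x (Suc j)) -` PiE {..<m} A \<inter> space (PiM {1..<Suc m} (\<lambda>_. lborel))"
  show "x \<in> PiE {1..<Suc m} (\<lambda>i. A (i - 1))"
  proof (rule PiE_I)
    fix i assume i: "i \<in> {1..<Suc m}"
    then have "i - 1 < m" by auto
    with x have "x (Suc (i - 1)) \<in> A (i - 1)" by (auto simp: PiE_iff)
    with i show "x i \<in> A (i - 1)" by simp
  next
    fix i assume "i \<notin> {1..<Suc m}" with x show "x i = undefined" by (auto simp: space_PiM PiE_iff extensional_def)
  qed
next
  fix x assume x: "x \<in> PiE {1..<Suc m} (\<lambda>i. A (i - 1))"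
  have "(\<lambda>j\<in>{..<m}. x (Suc j)) \<in> PiE {..<m} A"
  proof (rule PiE_I)
    fix j assume "j \<in> {..<m}"
    then have "Suc j \<in> {1..<Suc m}" by auto
    from PiE_mem[OF x this] have "x (Suc j) \<in> A (Suc j - 1)" .
    with \<open>j \<in> {..<m}\<close> show "(\<lambda>j\<in>{..<m}. x (Suc j)) j \<in> A j" by simp
  qed auto
  moreover have "x \<in> space (PiM {1..<Suc m} (\<lambda>_. lborel))" using x by (auto simp: space_PiM PiE_iff)
  ultimately show "x \<in> (\<lambda>x. \<lambda>j\<in>{..<m}. x (Suc j)) -` PiE {..<m} A \<inter> space (PiM {1..<Suc m} (\<lambda>_. lborel))" by simp
qed

lemma shift_meas[measurable]:
  "(\<lambda>x. \<lambda>j\<in>{..<m}. x (Suc j)) \<in> measurable (PiM {1..<Suc m} (\<lambda>_. lborel)) (PiM {..<m} (\<lambda>_. (lborel::real measure)))"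
  by (rule measurable_restrict) auto

lemma PiM_shift:
  "distr (PiM {1..<Suc m} (\<lambda>_. lborel)) (PiM {..<m} (\<lambda>_. lborel)) (\<lambda>x. \<lambda>j\<in>{..<m}. x (Suc j))
     = PiM {..<m} (\<lambda>_. lborel :: real measure)"
proof -
  interpret product_sigma_finite "\<lambda>_. lborel :: real measure" by standard
  show ?thesis
  proof (rule PiM_eqI)
    fix A :: "nat \<Rightarrow> real set" assume A: "\<And>i. i \<in> {..<m} \<Longrightarrow> A i \<in> sets lborel"
    have "emeasure (distr (PiM {1..<Suc m} (\<lambda>_. lborel)) (PiM {..<m} (\<lambda>_. lborel)) (\<lambda>x. \<lambda>j\<in>{..<m}. x (Suc j))) (PiE {..<m} A)
       = emeasure (PiM {1..<Suc m} (\<lambda>_. lborel)) (PiE {1..<Suc m} (\<lambda>i. A (i - 1)))"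
      apply (subst emeasure_distr)
        apply simp
      using A apply (auto intro!: sets_PiM_I_finite)[1]
      apply (subst pre) apply (rule refl) done
    also have "\<dots> = (\<Prod>i\<in>{1..<Suc m}. emeasure lborel (A (i - 1)))"
      using A by (intro emeasure_PiM) auto
    also have "\<dots> = (\<Prod>i\<in>{..<m}. emeasure lborel (A i))"
      by (rule prod.reindex_bij_witness[of _ Suc "\<lambda>i. i - 1"]) auto
    finally show "emeasure (distr (PiM {1..<Suc m} (\<lambda>_. lborel)) (PiM {..<m} (\<lambda>_. lborel)) (\<lambda>x. \<lambda>j\<in>{..<m}. x (Suc j))) (PiE {..<m} A)
       = (\<Prod>i\<in>{..<m}. emeasure lborel (A i))" .
  qed auto
qed


lemma meas_prepend:
  fixes U :: "(nat \<Rightarrow> real) set" and C :: "real set"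
  assumes U: "U \<in> sets (PiM {..<m} (\<lambda>_. lborel))" and C: "C \<in> sets lborel"
  shows "emeasure (PiM {..<Suc m} (\<lambda>_. lborel))
     {x \<in> space (PiM {..<Suc m} (\<lambda>_. lborel)). x 0 \<in> C \<and> (\<lambda>j\<in>{..<m}. x (Suc j)) \<in> U}
   = emeasure lborel C * emeasure (PiM {..<m} (\<lambda>_. lborel)) U"
proof -
  interpret product_sigma_finite "\<lambda>_. lborel :: real measure" by standard
  let ?sh = "\<lambda>x. \<lambda>j\<in>{..<m}. x (Suc j)"
  let ?M = "PiM (insert 0 {1..<Suc m}) (\<lambda>_. lborel :: real measure)"
  let ?N = "PiM {1..<Suc m} (\<lambda>_. lborel :: real measure)"
  have ins: "{..<Suc m} = insert 0 {1..<Suc m}" by auto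
  define S where "S = {x \<in> space ?M. x 0 \<in> C \<and> ?sh x \<in> U}"
  have shm: "?sh \<in> measurable ?M (PiM {..<m} (\<lambda>_. lborel))"
    by (rule measurable_restrict) auto
  have Sm: "S \<in> sets ?M"
  proof -
    have "S = ((\<lambda>x. x 0) -` C \<inter> space ?M) \<inter> (?sh -` U \<inter> space ?M)" unfolding S_def by auto
    moreover have "(\<lambda>x. x 0) -` C \<inter> space ?M \<in> sets ?M"
      by (rule measurable_sets[OF _ C]) simp
    moreover have "?sh -` U \<inter> space ?M \<in> sets ?M"
      by (rule measurable_sets[OF shm U])
    ultimately show ?thesis by auto
  qed
  have "emeasure ?M S = (\<integral>\<^sup>+ x. indicator S x \<partial>?M)"
    using Sm by simp
  also have "\<dots> = (\<integral>\<^sup>+ x. (\<integral>\<^sup>+ y. indicator S (x(0 := y)) \<partial>lborel) \<partial>?N)"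
    by (rule product_nn_integral_insert) (use Sm in auto)
  also have "\<dots> = (\<integral>\<^sup>+ x. emeasure lborel C * indicator U (?sh x) \<partial>?N)"
  proof (rule nn_integral_cong)
    fix x assume x: "x \<in> space ?N"
    have "\<And>y. indicator S (x(0 := y)) = (indicator C y * indicator U (?sh x) :: ennreal)"
    proof -
      fix y
      have "x(0 := y) \<in> space ?M" using x by (auto simp: space_PiM PiE_iff extensional_def)
      moreover have "?sh (x(0 := y)) = ?sh x" by (auto simp: restrict_def)
      ultimately show "indicator S (x(0 := y)) = (indicator C y * indicator U (?sh x) :: ennreal)"
        unfolding S_def by (auto simp: indicator_def)
    qed
    then have "(\<integral>\<^sup>+ y. indicator S (x(0 := y)) \<partial>lborel) = (\<integral>\<^sup>+ y. indicator C y * indicator U (?sh x) \<partial>lborel)"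
      by simp
    also have "\<dots> = (\<integral>\<^sup>+ y. indicator C y \<partial>lborel) * indicator U (?sh x)"
      by (rule nn_integral_multc) (use C in auto)
    also have "\<dots> = emeasure lborel C * indicator U (?sh x)" using C by simp
    finally show "(\<integral>\<^sup>+ y. indicator S (x(0 := y)) \<partial>lborel) = emeasure lborel C * indicator U (?sh x)" .
  qed
  also have "\<dots> = emeasure lborel C * (\<integral>\<^sup>+ x. indicator U (?sh x) \<partial>?N)"
    by (rule nn_integral_cmult) (use U in measurable)
  also have "(\<integral>\<^sup>+ x. indicator U (?sh x) \<partial>?N) = (\<integral>\<^sup>+ z. indicator U z \<partial>(distr ?N (PiM {..<m} (\<lambda>_. lborel)) ?sh))"
    by (rule nn_integral_distr[symmetric, OF shift_meas]) (use U in auto)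
  also have "\<dots> = emeasure (PiM {..<m} (\<lambda>_. lborel)) U"
    by (simp only: PiM_shift) (use U in simp)
  finally show ?thesis unfolding ins S_def .
qed


lemma sets_prepend:
  fixes U :: "(nat \<Rightarrow> real) set" and C :: "real set"
  assumes U: "U \<in> sets (PiM {..<m} (\<lambda>_. lborel))" and C: "C \<in> sets lborel"
  shows "{x \<in> space (PiM {..<Suc m} (\<lambda>_. lborel)). x 0 \<in> C \<and> (\<lambda>j\<in>{..<m}. x (Suc j)) \<in> U}
     \<in> sets (PiM {..<Suc m} (\<lambda>_. lborel))"
proof -
  let ?sh = "\<lambda>x. \<lambda>j\<in>{..<m}. x (Suc j)"
  let ?M = "PiM {..<Suc m} (\<lambda>_. lborel :: real measure)"
  have shm: "?sh \<in> measurable ?M (PiM {..<m} (\<lambda>_. lborel))"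
    by (rule measurable_restrict) auto
  have "{x \<in> space ?M. x 0 \<in> C \<and> ?sh x \<in> U} = ((\<lambda>x. x 0) -` C \<inter> space ?M) \<inter> (?sh -` U \<inter> space ?M)" by auto
  moreover have "(\<lambda>x. x 0) -` C \<inter> space ?M \<in> sets ?M"
    by (rule measurable_sets[OF _ C]) simp
  moreover have "?sh -` U \<inter> space ?M \<in> sets ?M"
    by (rule measurable_sets[OF shm U])
  ultimately show ?thesis by auto
qed



lemma sqf_prod_pf:
  fixes n :: nat
  assumes "n > 0" "squarefree n"
  shows "\<Prod>(prime_factors n) = n"
proof -
  have "(\<Prod>p \<in> prime_factors n. p ^ multiplicity p n) = n"
    using prod_prime_factors[of n] assms by simp
  moreover have "\<And>p. p \<in> prime_factors n \<Longrightarrow> multiplicity p n = 1"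
    using assms squarefree_factorial_semiring'[of n] by auto
  ultimately show ?thesis by (metis (no_types, lifting) power_one_right prod.cong)
qed

lemma primes_prod:
  fixes P :: "nat set"
  assumes "finite P" "\<And>p. p \<in> P \<Longrightarrow> prime p"
  shows "prime_factors (\<Prod>P) = P" "squarefree (\<Prod>P)" "\<Prod>P > 0"
proof -
  have "prime_factors (prod id P) = \<Union>((prime_factors \<circ> id) ` P)"
    using assms by (intro prime_factors_prod) (auto dest: assms(2))
  also have "\<dots> = P" using assms by (auto simp: prime_prime_factors)
  finally show "prime_factors (\<Prod>P) = P" by simp
  show "squarefree (\<Prod>P)"
    using assms by (intro squarefree_prod_coprime) (auto intro: primes_coprime squarefree_prime)
  show "\<Prod>P > 0" using assms by (metis prime_gt_0_nat prod_pos)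
qed

lemma finite_Pstar: "finite (Pstar y z)"
proof -
  have "Pstar y z \<subseteq> (\<lambda>S. \<Prod>S) ` Pow {..nat \<lfloor>z\<rfloor>}"
  proof
    fix n assume n: "n \<in> Pstar y z"
    then have "n = \<Prod>(prime_factors n)" using sqf_prod_pf unfolding Pstar_def by auto
    moreover have "prime_factors n \<subseteq> {..nat \<lfloor>z\<rfloor>}"
    proof
      fix p assume p: "p \<in> prime_factors n"
      then have "real p \<le> z" using n unfolding Pstar_def by auto
      then show "p \<in> {..nat \<lfloor>z\<rfloor>}" by (simp add: le_nat_floor)
    qed
    ultimately show "n \<in> (\<lambda>S. \<Prod>S) ` Pow {..nat \<lfloor>z\<rfloor>}" by blast
  qed
  then show ?thesis by (rule finite_subset) auto
qed

lemma finite_Pstar_vec: "finite (Pstar_vec s)"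
proof -
  let ?A = "\<Union>i<length s. Pstar ((1 # s) ! i) (s ! i)"
  have "Pstar_vec s \<subseteq> {xs. set xs \<subseteq> ?A \<and> length xs = length s}"
    unfolding Pstar_vec_def by (force simp: in_set_conv_nth)
  moreover have "finite {xs. set xs \<subseteq> ?A \<and> length xs = length s}"
    by (rule finite_lists_length_eq) (auto simp: finite_Pstar)
  ultimately show ?thesis by (rule finite_subset)
qed

lemma Pstar_vec_pos: "a \<in> Pstar_vec s \<Longrightarrow> x \<in> set a \<Longrightarrow> x > 0"
  unfolding Pstar_vec_def Pstar_def by (auto simp: in_set_conv_nth)

lemma Pstar_vec_surj:
  assumes b: "b \<in> Pstar_vec (s1 # r)"
  shows "\<exists>a \<in> Pstar_vec (s0 # s1 # r). b = (a ! 0 * a ! 1) # drop 2 a"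
proof -
  obtain b0 br where bb: "b = b0 # br" using b unfolding Pstar_vec_def by (cases b) auto
  have lbr: "length br = length r" using b bb unfolding Pstar_vec_def by auto
  have b0: "b0 \<in> Pstar 1 s1" using b bb unfolding Pstar_vec_def by force
  have brj: "\<And>j. j < length r \<Longrightarrow> br ! j \<in> Pstar ((s1 # r) ! j) (r ! j)"
  proof -
    fix j assume "j < length r"
    then have "b ! Suc j \<in> Pstar ((1 # s1 # r) ! Suc j) ((s1 # r) ! Suc j)"
      using b unfolding Pstar_vec_def by auto
    then show "br ! j \<in> Pstar ((s1 # r) ! j) (r ! j)" using bb by simp
  qed
  define A0 where "A0 = {p \<in> prime_factors b0. real p \<le> s0}"
  define A1 where "A1 = {p \<in> prime_factors b0. s0 < real p}"
  have fin: "finite A0" "finite A1" unfolding A0_def A1_def by auto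
  have pr: "\<And>p. p \<in> A0 \<Longrightarrow> prime p" "\<And>p. p \<in> A1 \<Longrightarrow> prime p" unfolding A0_def A1_def by auto
  have "\<Prod>A0 * \<Prod>A1 = \<Prod>(A0 \<union> A1)"
    by (rule prod.union_disjoint[symmetric]) (auto simp: fin A0_def A1_def)
  also have "A0 \<union> A1 = prime_factors b0" unfolding A0_def A1_def by auto
  also have "\<Prod>(prime_factors b0) = b0" using b0 sqf_prod_pf unfolding Pstar_def by auto
  finally have prodeq: "\<Prod>A0 * \<Prod>A1 = b0" .
  have p1: "\<And>p. p \<in> prime_factors b0 \<Longrightarrow> 1 < real p \<and> real p \<le> s1"
    using b0 unfolding Pstar_def by auto
  have a0: "\<Prod>A0 \<in> Pstar 1 s0"
    unfolding Pstar_def using primes_prod[OF fin(1) pr(1)] p1 by (auto simp: A0_def)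
  have a1: "\<Prod>A1 \<in> Pstar s0 s1"
    unfolding Pstar_def using primes_prod[OF fin(2) pr(2)] p1 by (auto simp: A1_def)
  define a where "a = \<Prod>A0 # \<Prod>A1 # br"
  have "a \<in> Pstar_vec (s0 # s1 # r)"
    unfolding Pstar_vec_def
  proof (intro CollectI conjI allI impI)
    show "length a = length (s0 # s1 # r)" using lbr by (simp add: a_def)
    fix i assume i: "i < length (s0 # s1 # r)"
    show "a ! i \<in> Pstar ((1 # s0 # s1 # r) ! i) ((s0 # s1 # r) ! i)"
    proof (cases i)
      case 0 then show ?thesis using a0 by (simp add: a_def)
    next
      case (Suc i')
      show ?thesis
      proof (cases i')
        case 0 then show ?thesis using a1 Suc by (simp add: a_def)
      next
        case (Suc j)
        then show ?thesis using brj[of j] i \<open>i = Suc i'\<close> by (simp add: a_def)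
      qed
    qed
  qed
  moreover have "b = (a ! 0 * a ! 1) # drop 2 a" using bb prodeq by (simp add: a_def)
  ultimately show ?thesis by blast
qed



lemma Lbox_sets: "Lbox d \<in> sets (PiM {..<length d} (\<lambda>_. lborel))"
  unfolding Lbox_def by (rule sets_PiM_I_finite) auto

lemma adm_bound:
  assumes a: "\<forall>x\<in>set a. x > 0" and d: "d \<in> adm_d a" and i: "i < length d"
  shows "d ! i \<le> prod_list a" "d ! i > 0"
proof -
  have ld: "length d = length a" using d unfolding adm_d_def by auto
  show "d ! i > 0" using d i unfolding adm_d_def by auto
  have "d ! i dvd prod_list (take (Suc i) d)"
    by (rule prod_list_dvd) (use i in \<open>auto simp: in_set_conv_nth\<close>)
  also have "\<dots> dvd prod_list (take (Suc i) a)" using d i ld unfolding adm_d_def by auto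
  also have "\<dots> dvd prod_list a"
    by (metis append_take_drop_id dvd_triv_left prod_list.append)
  finally have "d ! i dvd prod_list a" .
  moreover have "prod_list a > 0" using a by (induction a) auto
  ultimately show "d ! i \<le> prod_list a" by (rule dvd_imp_le)
qed

lemma U_fmeas:
  assumes a: "\<forall>x\<in>set a. x > 0"
  shows "(\<Union>d\<in>adm_d a. Lbox d) \<in> fmeasurable (PiM {..<length a} (\<lambda>_. lborel))"
proof -
  interpret product_sigma_finite "\<lambda>_. lborel :: real measure" by standard
  define P where "P = prod_list a"
  have P1: "P \<ge> 1" using a unfolding P_def by (induction a) auto
  define B where "B = PiE {..<length a} (\<lambda>_. {- ln 2 .. ln (real P)})"
  have lnP: "ln (real P) \<ge> 0" using P1 by simp
  have "emeasure (PiM {..<length a} (\<lambda>_. lborel)) B = (\<Prod>i\<in>{..<length a}. emeasure lborel {- ln 2 .. ln (real P)})"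
    unfolding B_def by (rule emeasure_PiM) auto
  also have "\<dots> = ennreal (ln (real P) + ln 2) ^ length a"
  proof -
    have "emeasure lborel {- ln 2 .. ln (real P)} = ennreal (ln (real P) - - ln 2)"
      by (rule emeasure_lborel_Icc) (use lnP ln_ge_zero[of 2] in linarith)
    then show ?thesis by simp
  qed
  finally have "emeasure (PiM {..<length a} (\<lambda>_. lborel)) B < top"
    by (simp add: power_less_top_ennreal)
  then have Bf: "B \<in> fmeasurable (PiM {..<length a} (\<lambda>_. lborel))"
    by (intro fmeasurableI) (auto simp: B_def intro!: sets_PiM_I_finite)
  show ?thesis
  proof (rule fmeasurable_UN[OF _ _ _ Bf])
    show "countable (adm_d a)" by simp
  next
    fix d assume d: "d \<in> adm_d a"
    have ld: "length d = length a" using d unfolding adm_d_def by auto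
    then show "Lbox d \<in> sets (PiM {..<length a} (\<lambda>_. lborel))" using Lbox_sets[of d] by simp
    show "Lbox d \<subseteq> B"
      unfolding Lbox_def B_def ld
    proof (rule PiE_mono)
      fix i assume i: "i \<in> {..<length a}"
      then have b1: "d ! i \<le> P" "d ! i > 0" using adm_bound[OF a d] ld by (auto simp: P_def)
      have "ln (real (d ! i) / 2) = ln (real (d ! i)) - ln 2" using b1 by (simp add: ln_div)
      moreover have "ln (real (d ! i)) \<ge> 0" using b1 by simp
      moreover have "ln (real (d ! i)) \<le> ln (real P)" using b1 by simp
      ultimately show "{ln (real (d ! i) / 2)..<ln (real (d ! i))} \<subseteq> {- ln 2..ln (real P)}" by auto
    qed
  qed
qed



lemma Lmeas_step:
  assumes pos: "\<forall>x\<in>set (a0 # a1 # r). x > 0"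
  shows "ln 2 * Lmeas ((a0 * a1) # r) \<le> Lmeas (a0 # a1 # r)"
proof -
  define a where "a = a0 # a1 # r"
  define b where "b = (a0 * a1) # r"
  define m where "m = length b"
  have la: "length a = Suc m" by (simp add: a_def b_def m_def)
  have posb: "\<forall>x\<in>set b. x > 0" using pos by (auto simp: b_def)
  let ?sh = "\<lambda>x. \<lambda>j\<in>{..<m}. x (Suc j)"
  let ?M = "PiM {..<Suc m} (\<lambda>_. lborel :: real measure)"
  define Ua where "Ua = (\<Union>d\<in>adm_d a. Lbox d)"
  define Ub where "Ub = (\<Union>d\<in>adm_d b. Lbox d)"
  have Uaf: "Ua \<in> fmeasurable ?M" using U_fmeas[of a] pos la by (simp add: Ua_def a_def)
  have Ubf: "Ub \<in> fmeasurable (PiM {..<m} (\<lambda>_. lborel))" using U_fmeas[OF posb] by (simp add: Ub_def m_def)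
  define S where "S = {x \<in> space ?M. x 0 \<in> {- ln 2..<0} \<and> ?sh x \<in> Ub}"
  have Ss: "S \<in> sets ?M" unfolding S_def
    by (rule sets_prepend) (use Ubf in auto)
  have SU: "S \<subseteq> Ua"
  proof
    fix x assume x: "x \<in> S"
    then obtain e where e: "e \<in> adm_d b" "?sh x \<in> Lbox e" unfolding S_def Ub_def by auto
    have le: "length e = m" using e(1) unfolding adm_d_def m_def by auto
    have "1 # e \<in> adm_d a"
      unfolding adm_d_def
    proof (intro CollectI conjI allI impI)
      show "length (1 # e) = length a" using le la by simp
      fix i assume i: "i < length (1 # e)"
      show "(1 # e) ! i > 0"
        using e(1) i unfolding adm_d_def by (cases i) auto
    next
      fix i assume i: "i < length a"
      show "prod_list (take (Suc i) (1 # e)) dvd prod_list (take (Suc i) a)"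
      proof (cases i)
        case 0 then show ?thesis by simp
      next
        case (Suc j)
        have "j < length b" using i la Suc m_def by simp
        then have "prod_list (take (Suc j) e) dvd prod_list (take (Suc j) b)"
          using e(1) le m_def unfolding adm_d_def by auto
        moreover have "prod_list (take (Suc j) b) = prod_list (take (Suc (Suc j)) a)"
          by (simp add: a_def b_def)
        ultimately show ?thesis using Suc by simp
      qed
    qed
    moreover have "x \<in> Lbox (1 # e)"
      unfolding Lbox_def
    proof (rule PiE_I)
      fix i assume i: "i \<in> {..<length (1 # e)}"
      show "x i \<in> {ln (real ((1 # e) ! i) / 2)..<ln (real ((1 # e) ! i))}"
      proof (cases i)
        case 0 then show ?thesis using x by (simp add: S_def ln_div)
      next
        case (Suc j)
        then have j: "j < m" using i le by simp
        have "?sh x j \<in> {ln (real (e ! j) / 2)..<ln (real (e ! j))}"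
          using e(2) j le unfolding Lbox_def by (auto simp: PiE_iff)
        then show ?thesis using Suc j by simp
      qed
    next
      fix i assume "i \<notin> {..<length (1 # e)}"
      then show "x i = undefined" using x le unfolding S_def by (auto simp: space_PiM PiE_iff extensional_def)
    qed
    ultimately show "x \<in> Ua" unfolding Ua_def by blast
  qed
  have "emeasure ?M S = emeasure lborel {- ln (2::real)..<0} * emeasure (PiM {..<m} (\<lambda>_. lborel)) Ub"
    unfolding S_def by (rule meas_prepend) (use Ubf in auto)
  also have "\<dots> = ennreal (ln 2) * ennreal (measure (PiM {..<m} (\<lambda>_. lborel)) Ub)"
    using Ubf by (simp add: emeasure_eq_measure2)
  finally have "measure ?M S = ln 2 * measure (PiM {..<m} (\<lambda>_. lborel)) Ub"
    by (simp add: measure_def enn2real_mult)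
  moreover have "measure ?M S \<le> measure ?M Ua"
    by (rule measure_mono_fmeasurable[OF SU Ss Uaf])
  ultimately show ?thesis
    unfolding Lmeas_def using la by (simp add: Ua_def Ub_def a_def b_def m_def)
qed

lemma Lmeas_single:
  assumes "n > 0"
  shows "ln 2 \<le> Lmeas [n]"
proof -
  interpret product_sigma_finite "\<lambda>_. lborel :: real measure" by standard
  let ?M = "PiM {..<1} (\<lambda>_. lborel :: real measure)"
  have Uf: "(\<Union>d\<in>adm_d [n]. Lbox d) \<in> fmeasurable ?M" using U_fmeas[of "[n]"] assms by simp
  have "[1] \<in> adm_d [n]" unfolding adm_d_def by auto
  then have sub: "Lbox [1] \<subseteq> (\<Union>d\<in>adm_d [n]. Lbox d)" by blast
  have "emeasure ?M (Lbox [1]) = (\<Prod>i\<in>{..<1::nat}. emeasure lborel {ln (1/2)..<ln (1::real)})"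
  proof -
    have eq1: "Lbox [1] = PiE {..<1} (\<lambda>_. {ln (1/2)..<ln (1::real)})" unfolding Lbox_def by (simp, rule PiE_cong, auto)
    show ?thesis unfolding eq1 by (subst emeasure_PiM) auto
  qed
  also have "\<dots> = ennreal (ln 2)" by (simp add: ln_div)
  finally have "measure ?M (Lbox [1]) = ln 2" by (simp add: measure_def)
  moreover have "measure ?M (Lbox [1]) \<le> measure ?M (\<Union>d\<in>adm_d [n]. Lbox d)"
    by (rule measure_mono_fmeasurable[OF sub _ Uf]) (use Lbox_sets[of "[1]"] in simp)
  ultimately show ?thesis unfolding Lmeas_def by simp
qed



lemma Lmeas_nonneg: "Lmeas a \<ge> 0"
  unfolding Lmeas_def by simp

lemma Ssum_step: "ln 2 * Ssum (s1 # r) \<le> Ssum (s0 # s1 # r)"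
proof -
  let ?P = "Pstar_vec (s0 # s1 # r)" and ?P' = "Pstar_vec (s1 # r)"
  let ?g = "\<lambda>a. (a ! 0 * a ! 1) # drop 2 a"
  let ?h = "\<lambda>b. Lmeas b / real (prod_list b)"
  have hnn: "\<And>b. ?h b \<ge> 0" using Lmeas_nonneg by simp
  have "Ssum (s1 # r) = sum ?h ?P'" unfolding Ssum_def ..
  also have "\<dots> \<le> sum ?h (?g ` ?P)"
  proof (rule sum_mono2)
    show "?P' \<subseteq> ?g ` ?P"
    proof
      fix b assume "b \<in> ?P'"
      from Pstar_vec_surj[OF this, of s0] obtain a where "a \<in> ?P" "b = ?g a" by blast
      then show "b \<in> ?g ` ?P" by blast
    qed
  qed (use finite_Pstar_vec hnn in auto)
  also have "\<dots> \<le> sum (?h \<circ> ?g) ?P"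
    by (rule sum_image_le) (use finite_Pstar_vec hnn in \<open>auto simp del: prod_list.Cons\<close>)
  finally have 1: "ln 2 * Ssum (s1 # r) \<le> ln 2 * sum (?h \<circ> ?g) ?P" by simp
  also have "\<dots> = (\<Sum>a\<in>?P. ln 2 * ?h (?g a))" by (simp add: sum_distrib_left)
  also have "\<dots> \<le> (\<Sum>a\<in>?P. Lmeas a / real (prod_list a))"
  proof (rule sum_mono)
    fix a assume a: "a \<in> ?P"
    then obtain a0 a1 r' where ar: "a = a0 # a1 # r'" unfolding Pstar_vec_def
      by (cases a; cases "tl a") auto
    have pos: "\<forall>x\<in>set (a0 # a1 # r'). x > 0" using Pstar_vec_pos[OF a] ar by simp
    have "ln 2 * Lmeas ((a0 * a1) # r') \<le> Lmeas (a0 # a1 # r')" by (rule Lmeas_step[OF pos])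
    then have "ln 2 * Lmeas ((a0 * a1) # r') / real (prod_list (a0 # a1 # r')) \<le> Lmeas (a0 # a1 # r') / real (prod_list (a0 # a1 # r'))"
      by (rule divide_right_mono) simp
    then show "ln 2 * ?h (?g a) \<le> Lmeas a / real (prod_list a)"
      using ar by (simp add: mult.assoc)
  qed
  also have "\<dots> = Ssum (s0 # s1 # r)" unfolding Ssum_def ..
  finally show ?thesis .
qed

lemma claim1: "l + 1 \<le> length t \<Longrightarrow> Ssum (drop l t) \<le> inverse (ln 2 ^ l) * Ssum t"
proof (induction l)
  case 0 then show ?case by simp
next
  case (Suc l)
  have IH: "Ssum (drop l t) \<le> inverse (ln 2 ^ l) * Ssum t" using Suc by simp
  have d1: "drop l t = t ! l # drop (Suc l) t" using Suc.prems by (simp add: Cons_nth_drop_Suc)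
  have d2: "drop (Suc l) t = t ! Suc l # drop (Suc (Suc l)) t" using Suc.prems by (simp add: Cons_nth_drop_Suc)
  have st: "ln 2 * Ssum (drop (Suc l) t) \<le> Ssum (drop l t)"
    using Ssum_step[of "t ! Suc l" "drop (Suc (Suc l)) t" "t ! l"] d1 d2 by simp
  have ln2: "ln (2::real) > 0" by simp
  have "Ssum (drop (Suc l) t) \<le> Ssum (drop l t) / ln 2" using st ln2 by (simp add: field_simps)
  also have "\<dots> \<le> inverse (ln 2 ^ l) * Ssum t / ln 2" using IH ln2 by (simp add: divide_right_mono)
  also have "\<dots> = inverse (ln 2 ^ Suc l) * Ssum t" by (simp add: field_simps)
  finally show ?case .
qed

lemma inv_sq_aux: "N \<ge> 1 \<Longrightarrow> (\<Sum>q\<in>{1..N}. 1 / real q ^ 2) \<le> 2 - 1 / real N"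
proof (induction N rule: nat_induct_at_least)
  case base then show ?case by simp
next
  case (Suc n)
  have "(\<Sum>q\<in>{1..Suc n}. 1 / real q ^ 2) = (\<Sum>q\<in>{1..n}. 1 / real q ^ 2) + 1 / real (Suc n) ^ 2"
    by simp
  also have "\<dots> \<le> 2 - 1 / real n + 1 / real (Suc n) ^ 2" using Suc by simp
  also have "\<dots> \<le> 2 - 1 / real (Suc n)"
  proof -
    have n: "real n \<ge> 1" using Suc by simp
    have "1 / real (Suc n) ^ 2 \<le> 1 / real n - 1 / real (Suc n)"
      using n by (simp add: divide_simps power2_eq_square)
    then show ?thesis by simp
  qed
  finally show ?case .
qed

lemma inv_sq: "(\<Sum>q\<in>{1..N}. 1 / real q ^ 2) \<le> 2"
proof (cases "N \<ge> 1")
  case True then show ?thesis using inv_sq_aux[OF True] by (smt (verit) divide_nonneg_nonneg of_nat_0_le_iff)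
qed simp



lemma harm_bound:
  assumes x: "1 \<le> x"
  shows "ln x \<le> 2 * (\<Sum>n\<in>Pstar 1 x. 1 / real n)"
proof -
  define N where "N = nat \<lfloor>x\<rfloor>"
  have xN: "x < real N + 1" "real N \<le> x" using x unfolding N_def by linarith+
  let ?f = "\<lambda>k::nat. (squarefree_part k, square_part k)"
  let ?phi = "\<lambda>z::nat \<times> nat. 1 / (real (fst z) * real (snd z) ^ 2)"
  have dec: "\<And>k::nat. k = squarefree_part k * square_part k ^ 2" by (rule squarefree_decompose)
  have "ln x \<le> ln (real N + 1)" using x xN by simp
  also have "\<dots> \<le> harm N" by (rule ln_le_harm)
  also have "harm N = (\<Sum>k\<in>{1..N}. 1 / real k)" unfolding harm_def by (simp add: divide_inverse)
  also have "\<dots> = (\<Sum>k\<in>{1..N}. ?phi (?f k))"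
  proof (rule sum.cong)
    fix k assume "k \<in> {1..N}"
    have "real k = real (squarefree_part k) * real (square_part k) ^ 2"
      by (subst dec) simp
    then show "1 / real k = ?phi (?f k)" by simp
  qed simp
  also have "\<dots> = sum ?phi (?f ` {1..N})"
  proof -
    have inj: "inj_on ?f {1..N}"
    proof (rule inj_onI)
      fix k1 k2 assume "?f k1 = ?f k2"
      then show "k1 = k2" using dec[of k1] dec[of k2] by simp
    qed
    show ?thesis by (subst sum.reindex[OF inj]) (simp add: comp_def)
  qed
  also have "\<dots> \<le> sum ?phi (Pstar 1 x \<times> {1..N})"
  proof (rule sum_mono2)
    show "finite (Pstar 1 x \<times> {1..N})" using finite_Pstar by simp
    show "?f ` {1..N} \<subseteq> Pstar 1 x \<times> {1..N}"
    proof
      fix z assume "z \<in> ?f ` {1..N}"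
      then obtain k where k: "k \<in> {1..N}" "z = ?f k" by blast
      have kpos: "k \<noteq> 0" using k by simp
      have "squarefree_part k \<in> Pstar 1 x"
        unfolding Pstar_def
      proof (intro CollectI conjI ballI)
        show "squarefree_part k > 0" using squarefree_part_nonzero[of k] by (simp only: gr0I)
        show "squarefree (squarefree_part k)" by simp
        fix p assume p: "p \<in> prime_factors (squarefree_part k)"
        then have pp: "prime p" by auto
        then show "1 < real p" using prime_gt_1_nat by simp
        have "p dvd squarefree_part k" using p by auto
        also have "squarefree_part k dvd k" by (subst (2) dec) simp
        finally have "p \<le> k" using kpos by (simp add: dvd_imp_le)
        then show "real p \<le> x" using k xN by simp
      qed
      moreover have "square_part k \<in> {1..N}"
      proof -
        have "square_part k \<ge> 1" using kpos square_part_0_iff[of k] by (cases "square_part k") auto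
        moreover have "square_part k \<le> square_part k ^ 2" by (simp add: power2_eq_square)
        moreover have "square_part k ^ 2 \<le> k"
          using kpos by (intro dvd_imp_le) auto
        ultimately show ?thesis using k by auto
      qed
      ultimately show "z \<in> Pstar 1 x \<times> {1..N}" using k by simp
    qed
  qed auto
  also have "\<dots> = (\<Sum>m\<in>Pstar 1 x. \<Sum>q\<in>{1..N}. 1 / real m * (1 / real q ^ 2))"
    by (subst sum.cartesian_product) (simp add: case_prod_beta)
  also have "\<dots> = (\<Sum>m\<in>Pstar 1 x. 1 / real m) * (\<Sum>q\<in>{1..N}. 1 / real q ^ 2)"
    by (simp add: sum_product)
  also have "\<dots> \<le> (\<Sum>m\<in>Pstar 1 x. 1 / real m) * 2"
    by (rule mult_left_mono[OF inv_sq]) (simp add: sum_nonneg)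
  finally show ?thesis by simp
qed

theorem lemma3p8:
  fixes k :: nat
  assumes "k \<ge> 2"
  shows "(\<forall>l (t :: real list). 1 \<le> l \<and> l \<le> k - 1 \<and> length t = k \<and> sorted t \<and> 3 \<le> t ! 0 \<longrightarrow>
            Ssum (drop l t) \<le> inverse (ln 2 ^ l) * Ssum t)
       \<and> (\<exists>c > 0. \<forall>(t :: real list). length t = k \<and> sorted t \<and> 3 \<le> t ! 0 \<longrightarrow>
            c * ln (t ! (k - 1)) \<le> Ssum t)"
proof (intro conjI allI impI)
  fix l and t :: "real list"
  assume h: "1 \<le> l \<and> l \<le> k - 1 \<and> length t = k \<and> sorted t \<and> 3 \<le> t ! 0"
  then show "Ssum (drop l t) \<le> inverse (ln 2 ^ l) * Ssum t"
    using assms by (intro claim1) auto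
next
  show "\<exists>c > 0. \<forall>(t :: real list). length t = k \<and> sorted t \<and> 3 \<le> t ! 0 \<longrightarrow>
            c * ln (t ! (k - 1)) \<le> Ssum t"
  proof (intro exI[of _ "ln 2 ^ k / 2"] conjI allI impI)
    show "ln 2 ^ k / 2 > (0::real)" by simp
    fix t :: "real list" assume h: "length t = k \<and> sorted t \<and> 3 \<le> t ! 0"
    define x where "x = t ! (k - 1)"
    have x3: "x \<ge> 3"
    proof -
      have "t ! 0 \<le> t ! (k - 1)" using h assms by (intro sorted_nth_mono) auto
      then show ?thesis using h by (simp add: x_def)
    qed
    have dr: "drop (k - 1) t = [x]"
    proof -
      have "drop (k - 1) t = t ! (k - 1) # drop (Suc (k - 1)) t"
        using h assms by (intro Cons_nth_drop_Suc[symmetric]) auto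
      moreover have "drop (Suc (k - 1)) t = []" using h assms by simp
      ultimately show ?thesis by (simp add: x_def)
    qed
    have c1: "Ssum [x] \<le> inverse (ln 2 ^ (k - 1)) * Ssum t"
      using claim1[of "k - 1" t] h assms dr by simp
    have pv: "Pstar_vec [x] = (\<lambda>n. [n]) ` Pstar 1 x"
    proof (rule set_eqI)
      fix a show "a \<in> Pstar_vec [x] \<longleftrightarrow> a \<in> (\<lambda>n. [n]) ` Pstar 1 x"
        unfolding Pstar_vec_def by (cases a) auto
    qed
    have "Ssum [x] = (\<Sum>n\<in>Pstar 1 x. Lmeas [n] / real n)"
      unfolding Ssum_def pv by (subst sum.reindex) (auto simp: inj_on_def)
    also have "\<dots> \<ge> (\<Sum>n\<in>Pstar 1 x. ln 2 * (1 / real n))"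
    proof (rule sum_mono)
      fix n assume "n \<in> Pstar 1 x"
      then have n: "n > 0" unfolding Pstar_def by auto
      then show "ln 2 * (1 / real n) \<le> Lmeas [n] / real n"
        using Lmeas_single[OF n] by (simp add: divide_right_mono)
    qed
    finally have "ln 2 * (\<Sum>n\<in>Pstar 1 x. 1 / real n) \<le> Ssum [x]" by (simp add: sum_distrib_left)
    moreover have "ln x / 2 \<le> (\<Sum>n\<in>Pstar 1 x. 1 / real n)" using harm_bound[of x] x3 by simp
    ultimately have "ln 2 * (ln x / 2) \<le> Ssum [x]"
    proof -
      assume a1: "ln 2 * (\<Sum>n\<in>Pstar 1 x. 1 / real n) \<le> Ssum [x]" and a2: "ln x / 2 \<le> (\<Sum>n\<in>Pstar 1 x. 1 / real n)"
      have "ln 2 * (ln x / 2) \<le> ln 2 * (\<Sum>n\<in>Pstar 1 x. 1 / real n)"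
        using a2 by (rule mult_left_mono) simp
      with a1 show ?thesis by linarith
    qed
    with c1 have "ln 2 * (ln x / 2) \<le> inverse (ln 2 ^ (k - 1)) * Ssum t" by linarith
    then have "ln 2 ^ (k - 1) * (ln 2 * (ln x / 2)) \<le> Ssum t"
      by (simp add: field_simps)
    moreover have "ln 2 ^ k = ln 2 ^ (k - 1) * ln (2::real)"
      using assms by (subst power_Suc2[symmetric]) simp
    ultimately show "ln 2 ^ k / 2 * ln (t ! (k - 1)) \<le> Ssum t"
      unfolding x_def[symmetric] by (simp add: field_simps)
  qed
qed


end
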